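(* Let $n\ge 2$ (in particular $n\ge3$), let $0<\varepsilon<1$ and let $K_{\varepsilon}$ be the body of revolution about the $x_n$-axis in $\mathbb{R}^n$ whose radial function is $\rho_{K_\varepsilon}(\phi)=(1+\varepsilon\cos^3\phi)^{-1/3}$, where $0\le\phi\le\pi$ is the angle with the positive $x_n$-axis; equivalently $\rho_{K_\varepsilon}(x)=(|x|^3+\varepsilon x_n^3)^{-1/3}$ for $x=(x_1,\dots,x_n)\in\mathbb{R}^n\setminus\{o\}$. Then $\rho_{K_\varepsilon}\in C^\infty(S^{n-1})$, the body $K_\varepsilon$ is not centrally symmetric, and there is a positive $\varepsilon_0\le 1$ such that $K_\varepsilon$ is convex for all $0<\varepsilon<\varepsilon_0$.
   Context: For a body $K$ star-shaped with respect to the origin and containing it in its interior, the radial function is $\rho_K(x)=\max\{c\in\mathbb{R}: cx\in K\}$, $x\ne o$ (homogeneous of degree $-1$); the body is determined by $\rho_K$ on $S^{n-1}$ via $K=\{x: x=o \text{ or } \rho_K(x)\ge 1\}$. A set is centrally symmetric if it is a translate of a set $X$ with $X=-X$. *)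

theory Defs
  imports "HOL-Analysis.Analysis"
begin

text \<open>C-infinity on an open set S of R^n (real valued): all iterated partial derivatives
  exist on S and are continuous on S.  D [i_k,...,i_1] is the partial derivative
  d_{i_k} ... d_{i_1} f.\<close>
definition smooth_on :: "(real^'n) set \<Rightarrow> (real^'n \<Rightarrow> real) \<Rightarrow> bool" where
  "smooth_on S f \<longleftrightarrow>
     (\<exists>D :: 'n list \<Rightarrow> real^'n \<Rightarrow> real.
        (\<forall>x\<in>S. D [] x = f x) \<and>
        (\<forall>is. continuous_on S (D is)) \<and>
        (\<forall>is i. \<forall>x\<in>S.
           ((\<lambda>t. D is (x + t *\<^sub>R axis i 1)) has_real_derivative D (i # is) x) (at 0)))"

text \<open>The radial function of K_eps, axis of revolution = coordinate axis a.\<close>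
definition rhoK :: "'n \<Rightarrow> real \<Rightarrow> real^'n \<Rightarrow> real" where
  "rhoK a \<epsilon> x = (norm x ^ 3 + \<epsilon> * (x $ a) ^ 3) powr (-1/3)"

definition Keps :: "'n \<Rightarrow> real \<Rightarrow> (real^'n) set" where
  "Keps a \<epsilon> = {x. x = 0 \<or> rhoK a \<epsilon> x \<ge> 1}"

definition centrally_symmetric :: "('a::real_vector) set \<Rightarrow> bool" where
  "centrally_symmetric K \<longleftrightarrow> (\<exists>c X. X = uminus ` X \<and> K = (\<lambda>x. c + x) ` X)"

end

theory Submission
  imports Defs
begin


lemma line_deriv:
  fixes f :: "real^'n \<Rightarrow> real"
  assumes "(f has_derivative f') (at x)"
  shows "((\<lambda>t. f (x + t *\<^sub>R v)) has_real_derivative f' v) (at 0)"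
proof -
  have l: "((\<lambda>t. x + t *\<^sub>R v) has_derivative (\<lambda>t. t *\<^sub>R v)) (at 0)"
    by (auto intro!: derivative_eq_intros)
  have "(f has_derivative f') (at ((\<lambda>t. x + t *\<^sub>R v) 0))" using assms by simp
  from has_derivative_compose[OF l this]
  have "((\<lambda>t. f (x + t *\<^sub>R v)) has_derivative (\<lambda>t. f' (t *\<^sub>R v))) (at 0)" by (simp add: o_def)
  moreover have "(\<lambda>t. f' (t *\<^sub>R v)) = (\<lambda>t. t * f' v)"
    using has_derivative_bounded_linear[OF assms] by (simp add: bounded_linear.linear linear_scale)
  moreover have "(*) (f' v) = (\<lambda>t. t * f' v)" by (auto simp: mult.commute)
  ultimately show ?thesis by (simp add: has_field_derivative_def)
qed

lemma Qpos:
  fixes x :: "real^'n"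
  assumes "x \<noteq> 0" "0 \<le> e" "e < 1"
  shows "norm x ^ 3 + e * (x $ a) ^ 3 > 0"
proof -
  have c: "\<bar>x$a\<bar> \<le> norm x" by (rule component_le_norm_cart)
  have n: "norm x > 0" using assms by simp
  have "\<bar>x$a\<bar>^3 \<le> norm x ^3" using c by (simp add: power_mono)
  moreover have "- ((x $ a) ^ 3) \<le> \<bar>x $ a\<bar> ^ 3" by (simp add: power_abs[symmetric])
  ultimately have "- ((x $ a) ^ 3) \<le> norm x ^ 3" by linarith
  hence "e * (- ((x $ a) ^ 3)) \<le> e * norm x ^ 3" using assms mult_left_mono by fastforce
  moreover have "e * norm x ^ 3 < norm x ^ 3" using n assms by simp
  ultimately show ?thesis by (simp add: algebra_simps)
qed



datatype 'n ex = C real | X 'n | R | Ri | F | Pl "'n ex" "'n ex" | Ti "'n ex" "'n ex"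

fun ev :: "'n \<Rightarrow> real \<Rightarrow> 'n ex \<Rightarrow> real^'n \<Rightarrow> real" where
  "ev a e (C c) x = c"
| "ev a e (X j) x = x $ j"
| "ev a e R x = norm x"
| "ev a e Ri x = inverse (norm x)"
| "ev a e F x = rhoK a e x"
| "ev a e (Pl p q) x = ev a e p x + ev a e q x"
| "ev a e (Ti p q) x = ev a e p x * ev a e q x"

fun dv :: "'n \<Rightarrow> real \<Rightarrow> 'n \<Rightarrow> 'n ex \<Rightarrow> 'n ex" where
  "dv a e i (C c) = C 0"
| "dv a e i (X j) = C (if j = i then 1 else 0)"
| "dv a e i R = Ti (X i) Ri"
| "dv a e i Ri = Ti (C (-1)) (Ti (X i) (Ti Ri (Ti Ri Ri)))"
| "dv a e i F = Ti (C (-1)) (Ti (Ti (Ti F F) (Ti F F))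
       (Pl (Ti R (X i)) (Ti (C (if i = a then e else 0)) (Ti (X a) (X a)))))"
| "dv a e i (Pl p q) = Pl (dv a e i p) (dv a e i q)"
| "dv a e i (Ti p q) = Pl (Ti (dv a e i p) q) (Ti p (dv a e i q))"

lemma dX:
  fixes x :: "real^'n"
  shows "((\<lambda>t. (x + t *\<^sub>R axis i 1) $ j) has_real_derivative (if j = i then 1 else 0)) (at 0)"
proof -
  have "((\<lambda>y::real^'n. y $ j) has_derivative (\<lambda>h. h $ j)) (at x)"
    by (rule bounded_linear_imp_has_derivative) auto
  from line_deriv[OF this, of "axis i 1"] show ?thesis by (simp only: axis_def vec_lambda_beta)
qed

lemma dR:
  fixes x :: "real^'n"
  assumes "x \<noteq> 0"
  shows "((\<lambda>t. norm (x + t *\<^sub>R axis i 1)) has_real_derivative x $ i / norm x) (at 0)"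
proof -
  from line_deriv[OF has_derivative_norm[OF assms], of "axis i 1"]
  show ?thesis by (simp add: inner_axis' sgn_div_norm divide_inverse mult.commute)
qed

lemma powr_four:
  fixes Q :: real assumes "Q > 0"
  shows "(Q powr (-1/3)) ^ 4 = Q powr (-1/3) / Q"
proof -
  have "(Q powr (-1/3)) ^ 4 = Q powr (-1/3) * (Q powr (-1/3) * Q powr (-1/3) * Q powr (-1/3))"
    by (simp only: power4_eq_xxxx mult.assoc)
  also have "Q powr (-1/3) * Q powr (-1/3) * Q powr (-1/3) = Q powr (-1/3 + -1/3 + -1/3)"
    by (simp only: powr_add)
  also have "(-1/3 + -1/3 + -1/3 :: real) = - 1" by simp
  also have "Q powr (- 1) = 1 / Q" by (rule powr_neg_one[OF assms])
  finally show ?thesis by (simp only: times_divide_eq_right mult_1_right)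
qed

lemma dF:
  fixes x :: "real^'n"
  assumes "x \<noteq> 0" "0 \<le> e" "e < 1"
  shows "((\<lambda>t. rhoK a e (x + t *\<^sub>R axis i 1)) has_real_derivative ev a e (dv a e i F) x) (at 0)"
proof -
  define Q where "Q = norm x ^ 3 + e * (x $ a) ^ 3"
  have Qp: "Q > 0" unfolding Q_def using Qpos[OF assms] .
  define m where "m = 3 * norm x ^ 2 * (x $ i / norm x) + e * (3 * (x $ a) ^ 2 * (if a = i then 1 else 0))"
  have dQ: "((\<lambda>t. norm (x + t *\<^sub>R axis i 1) ^ 3 + e * ((x + t *\<^sub>R axis i 1) $ a) ^ 3) has_real_derivative m) (at 0)"
    unfolding m_def
    by (rule derivative_eq_intros dR[OF assms(1)] dX refl | simp)+
  have "((\<lambda>t. (norm (x + t *\<^sub>R axis i 1) ^ 3 + e * ((x + t *\<^sub>R axis i 1) $ a) ^ 3) powr (-1/3)) has_real_derivative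
      Q powr (-1/3) * (0 * ln Q + m * (-1/3) / Q)) (at 0)"
    using DERIV_powr[OF dQ _ DERIV_const[of "-1/3"]] Qp by (simp add: Q_def)
  moreover have "Q powr (-1/3) * (0 * ln Q + m * (-1/3) / Q) = ev a e (dv a e i F) x"
  proof -
    have n: "norm x > 0" using assms by simp
    have "ev a e (dv a e i F) x = - ((Q powr (-1/3)) ^ 4 * (norm x * x $ i + (if i = a then e else 0) * (x $ a * x $ a)))"
      by (simp add: rhoK_def Q_def power4_eq_xxxx)
    also have "\<dots> = - (Q powr (-1/3) / Q * (norm x * x $ i + (if i = a then e else 0) * (x $ a * x $ a)))"
      using powr_four[OF Qp] by simp
    finally have E: "ev a e (dv a e i F) x = - (Q powr (-1/3) / Q * (norm x * x $ i + (if i = a then e else 0) * (x $ a * x $ a)))" .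
    show ?thesis unfolding E using n Qp by (auto simp: m_def field_simps power2_eq_square power3_eq_cube split: if_split)
  qed
  ultimately show ?thesis by (simp add: rhoK_def)
qed

lemma dv_correct:
  fixes x :: "real^'n"
  assumes "x \<noteq> 0" "0 \<le> e" "e < 1"
  shows "((\<lambda>t. ev a e p (x + t *\<^sub>R axis i 1)) has_real_derivative ev a e (dv a e i p) x) (at 0)"
proof (induction p)
  case (C c) then show ?case by simp
next
  case (X j) show ?case using dX[of x i j] by (simp only: ev.simps dv.simps)
next
  case R then show ?case using dR[OF assms(1)] by (simp add: divide_inverse)
next
  case Ri
  have "((\<lambda>t. inverse (norm (x + t *\<^sub>R axis i 1))) has_real_derivative
     - (x $ i / norm x * inverse ((norm (x + 0 *\<^sub>R axis i 1)) ^ Suc (Suc 0)))) (at 0)"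
    by (rule DERIV_inverse_fun[OF dR[OF assms(1)]]) (use assms in simp)
  then show ?case by (simp add: field_simps power2_eq_square)
next
  case F then show ?case using dF[OF assms] by simp
next
  case (Pl p q) then show ?case using DERIV_add[OF Pl.IH] by simp
next
  case (Ti p q) then show ?case using DERIV_mult[OF Ti.IH] by (simp add: mult.commute)
qed

lemma ev_cont:
  fixes e :: real and a :: "'n::finite"
  assumes "0 \<le> e" "e < 1"
  shows "continuous_on (UNIV - {0}) (ev a e p)"
proof (induction p)
  case F
  have "continuous_on (UNIV - {0}) (\<lambda>x::real^'n. (norm x ^ 3 + e * (x $ a) ^ 3) powr (-1/3))"
    by (intro continuous_intros) (use Qpos[OF _ assms, where a=a] in fastforce)
  then show ?case by (simp add: rhoK_def[abs_def])
next
  case (C c) show ?case by (simp add: continuous_on_const)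
next
  case (X j) show ?case by (simp add: continuous_on_component)
next
  case R show ?case by (simp add: continuous_on_norm_id)
next
  case Ri show ?case by simp (intro continuous_on_inverse continuous_on_norm_id; simp)
next
  case (Pl p q) then show ?case by (simp add: continuous_on_add)
next
  case (Ti p q) then show ?case by (simp add: continuous_on_mult)
qed

fun dvs :: "'n \<Rightarrow> real \<Rightarrow> 'n list \<Rightarrow> 'n ex \<Rightarrow> 'n ex" where
  "dvs a e [] p = p"
| "dvs a e (i # is) p = dv a e i (dvs a e is p)"

lemma smooth:
  assumes "0 \<le> e" "e < 1"
  shows "smooth_on (UNIV - {0}) (rhoK a e)"
  unfolding smooth_on_def
  apply (rule exI[of _ "\<lambda>is. ev a e (dvs a e is F)"])
proof (intro conjI ballI allI)
  fix x :: "real^'a" assume "x \<in> UNIV - {0}"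
  then have "x \<noteq> 0" by simp
  fix "is" i
  show "((\<lambda>t. ev a e (dvs a e is F) (x + t *\<^sub>R axis i 1)) has_real_derivative ev a e (dvs a e (i # is) F) x) (at 0)"
    using dv_correct[OF \<open>x \<noteq> 0\<close> assms] by simp
next
  fix "is" show "continuous_on (UNIV - {0}) (ev a e (dvs a e is F))" by (rule ev_cont[OF assms])
qed simp



lemma Kchar:
  fixes x :: "real^'n"
  assumes "0 \<le> e" "e < 1"
  shows "x \<in> Keps a e \<longleftrightarrow> norm x ^ 3 + e * (x $ a) ^ 3 \<le> 1"
proof (cases "x = 0")
  case True then show ?thesis by (simp add: Keps_def)
next
  case False
  define P where "P = norm x ^ 3 + e * (x $ a) ^ 3"
  have Pp: "P > 0" unfolding P_def by (rule Qpos[OF False assms])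
  have r: "rhoK a e x = 1 / P powr (1/3)"
    by (simp add: rhoK_def P_def powr_minus_divide[symmetric])
  have q: "P powr (1/3) > 0" using Pp by simp
  have "1 \<le> 1 / P powr (1/3) \<longleftrightarrow> P powr (1/3) \<le> 1" using q by (simp add: le_divide_eq)
  also have "\<dots> \<longleftrightarrow> P \<le> 1"
  proof
    assume "P powr (1/3) \<le> 1"
    show "P \<le> 1"
    proof (rule ccontr)
      assume "\<not> P \<le> 1"
      hence "1 powr (1/3) < P powr (1/3)" by (intro powr_less_mono2) auto
      thus False using \<open>P powr (1/3) \<le> 1\<close> by simp
    qed
  next
    assume "P \<le> 1"
    hence "P powr (1/3) \<le> 1 powr (1/3)" using Pp by (intro powr_mono2) auto
    thus "P powr (1/3) \<le> 1" by simp
  qed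
  finally show ?thesis using False by (simp add: Keps_def r P_def)
qed

lemma key_real:
  fixes r s d xa ya e :: real
  assumes "0 \<le> s" "0 \<le> d" "\<bar>r - s\<bar> \<le> d" "d \<le> r + s"
    "\<bar>xa\<bar> \<le> r" "\<bar>ya\<bar> \<le> s" "(xa - ya)^2 \<le> d^2" "0 \<le> e" "e \<le> 1/18"
  shows "r^3 + e * xa^3 \<ge> s^3 + e * ya^3 + 3 * s * ((r^2 + s^2 - d^2)/2 - s^2) + 3 * e * ya^2 * (xa - ya)"
proof -
  have r0: "0 \<le> r" using assms by linarith
  have h1: "r^3 - s^3 - 3 * s * ((r^2 + s^2 - d^2)/2 - s^2) = (r-s)^2 * (r + s/2) + 3/2 * s * d^2"
    by (simp add: field_simps power2_eq_square power3_eq_cube)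
  have h2: "xa^3 - ya^3 - 3 * ya^2 * (xa - ya) = (xa-ya)^2 * (xa + 2 * ya)"
    by (simp add: algebra_simps power2_eq_square power3_eq_cube)
  have ab: "abs (xa + 2 * ya) \<le> r + 2 * s" using assms by linarith
  have h3: "(xa-ya)^2 * (xa + 2 * ya) \<ge> - (d^2 * (r + 2 * s))"
  proof -
    have "(xa-ya)^2 * abs (xa + 2 * ya) \<le> d^2 * (r + 2 * s)"
      using mult_mono[OF assms(7) ab] by simp
    moreover have "- ((xa-ya)^2 * abs (xa + 2 * ya)) \<le> (xa-ya)^2 * (xa + 2 * ya)"
    proof -
      have "- abs (xa + 2 * ya) \<le> xa + 2 * ya" by linarith
      from mult_left_mono[OF this, of "(xa-ya)^2"] show ?thesis by simp
    qed
    ultimately show ?thesis by linarith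
  qed
  have h4: "e * (d^2 * (r + 2 * s)) \<le> (r-s)^2 * (r + s/2) + 3/2 * s * d^2"
  proof (cases "r \<le> 2 * s")
    case True
    have A: "d^2 * (r + 2 * s) \<le> d^2 * (4 * s)" using True by (intro mult_left_mono) simp_all
    have B: "e * (d^2 * (r + 2 * s)) \<le> 1/18 * (d^2 * (r + 2 * s))"
      using assms(9) by (rule mult_right_mono) (use r0 assms(1) in simp)
    have C: "0 \<le> (r-s)^2 * (r + s/2)" using r0 assms(1) by simp
    have D: "0 \<le> s * d^2" using assms(1) by simp
    have X1: "d^2 * (4 * s) = 4 * (s * d^2)" "3/2 * s * d^2 = 3/2 * (s * d^2)" by simp_all
    show ?thesis using A B C D X1 by linarith
  next
    case False
    have dd: "d^2 \<le> (3/2 * r)^2" using assms False by (intro power_mono) auto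
    have A: "d^2 * (r + 2 * s) \<le> (3/2 * r)^2 * (2 * r)"
      by (rule mult_mono[OF dd]) (use False assms(1) in simp_all)
    have B: "e * (d^2 * (r + 2 * s)) \<le> 1/18 * (d^2 * (r + 2 * s))"
      using assms(9) by (rule mult_right_mono) (use r0 assms(1) in simp)
    have E: "(r/2)^2 \<le> (r-s)^2" using False assms(1) r0 by (intro power_mono) simp_all
    have F: "(r/2)^2 * r \<le> (r-s)^2 * (r + s/2)"
      by (rule mult_mono[OF E]) (use assms(1) r0 in simp_all)
    have G: "1/18 * ((3/2 * r)^2 * (2 * r)) = (r/2)^2 * r" by (simp add: power2_eq_square)
    have D: "0 \<le> s * d^2" using assms(1) by simp
    show ?thesis using A B F G D by linarith
  qed
  have M: "e * ((xa-ya)^2 * (xa + 2 * ya)) \<ge> e * (- (d^2 * (r + 2 * s)))"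
    using h3 assms(8) by (rule mult_left_mono)
  have eq: "r^3 + e * xa^3 - (s^3 + e * ya^3 + 3 * s * ((r^2 + s^2 - d^2)/2 - s^2) + 3 * e * ya^2 * (xa - ya))
     = (r^3 - s^3 - 3 * s * ((r^2 + s^2 - d^2)/2 - s^2)) + e * (xa^3 - ya^3 - 3 * ya^2 * (xa - ya))"
    by (simp add: algebra_simps)
  show ?thesis using eq h1 h2 h4 M by simp
qed



lemma grad:
  fixes x y :: "real^'n"
  assumes "0 \<le> e" "e \<le> 1/18"
  shows "norm x ^ 3 + e * (x $ a) ^ 3 \<ge> norm y ^ 3 + e * (y $ a) ^ 3
           + 3 * norm y * (y \<bullet> (x - y)) + 3 * e * (y $ a) ^ 2 * ((x - y) $ a)"
proof -
  define r s d where "r = norm x" "s = norm y" "d = norm (x - y)"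
  have dsq: "d^2 = r^2 + s^2 - 2 * (x \<bullet> y)"
    unfolding r_s_d_def power2_norm_eq_inner by (simp add: inner_diff_left inner_diff_right inner_commute)
  have ip: "y \<bullet> (x - y) = (r^2 + s^2 - d^2)/2 - s^2"
    using dsq unfolding r_s_d_def power2_norm_eq_inner by (simp add: inner_diff_right inner_commute)
  have c1: "\<bar>r - s\<bar> \<le> d" unfolding r_s_d_def by (rule norm_triangle_ineq3)
  have c2: "d \<le> r + s" unfolding r_s_d_def by (rule norm_triangle_ineq4)
  have c3: "\<bar>x $ a\<bar> \<le> r" "\<bar>y $ a\<bar> \<le> s" unfolding r_s_d_def by (rule component_le_norm_cart)+
  have "\<bar>(x - y) $ a\<bar> \<le> d" unfolding r_s_d_def by (rule component_le_norm_cart)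
  hence "\<bar>(x - y) $ a\<bar>^2 \<le> d^2" by (intro power_mono) auto
  hence c4: "(x $ a - y $ a)^2 \<le> d^2" by simp
  have "r^3 + e * (x $ a)^3 \<ge> s^3 + e * (y $ a)^3 + 3 * s * ((r^2 + s^2 - d^2)/2 - s^2) + 3 * e * (y $ a)^2 * (x $ a - y $ a)"
    by (rule key_real) (use c1 c2 c3 c4 assms in \<open>auto simp: r_s_d_def\<close>)
  then show ?thesis using ip by (simp add: r_s_d_def)
qed

lemma convK:
  fixes a :: "'n::finite"
  assumes "0 \<le> e" "e \<le> 1/18"
  shows "convex (Keps a e)"
  unfolding convex_def
proof (intro ballI allI impI)
  fix x y :: "real^'n" and u v :: real
  assume xK: "x \<in> Keps a e" and yK: "y \<in> Keps a e" and uv: "0 \<le> u" "0 \<le> v" "u + v = 1"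
  have e1: "e < 1" using assms by simp
  define P where "P = (\<lambda>z::real^'n. norm z ^ 3 + e * (z $ a) ^ 3)"
  have Px: "P x \<le> 1" and Py: "P y \<le> 1" using xK yK Kchar[OF assms(1) e1] by (auto simp: P_def)
  define z where "z = u *\<^sub>R x + v *\<^sub>R y"
  define K M where "K = 3 * norm z" "M = 3 * e * (z $ a)^2"
  define A1 A2 B1 B2 where "A1 = z \<bullet> (x - z)" "A2 = z \<bullet> (y - z)" "B1 = (x - z) $ a" "B2 = (y - z) $ a"
  have g1: "P x \<ge> P z + K * A1 + M * B1" using grad[OF assms, where x=x and y=z and a=a] by (simp add: P_def K_M_def A1_A2_B1_B2_def)
  have g2: "P y \<ge> P z + K * A2 + M * B2" using grad[OF assms, where x=y and y=z and a=a] by (simp add: P_def K_M_def A1_A2_B1_B2_def)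
  have w0: "u *\<^sub>R (x - z) + v *\<^sub>R (y - z) = 0"
  proof -
    have "u *\<^sub>R (x - z) + v *\<^sub>R (y - z) = z - (u + v) *\<^sub>R z"
      by (simp add: z_def algebra_simps)
    also have "\<dots> = 0" using uv by simp
    finally show ?thesis .
  qed
  have A0: "u * A1 + v * A2 = 0"
  proof -
    have "u * A1 + v * A2 = z \<bullet> (u *\<^sub>R (x - z) + v *\<^sub>R (y - z))"
      by (simp add: A1_A2_B1_B2_def inner_add_right)
    thus ?thesis using w0 by simp
  qed
  have B0: "u * B1 + v * B2 = 0"
  proof -
    have "u * B1 + v * B2 = (u *\<^sub>R (x - z) + v *\<^sub>R (y - z)) $ a"
      by (simp add: A1_A2_B1_B2_def)
    thus ?thesis using w0 by simp
  qed
  have i1: "u * P x \<ge> u * (P z + K * A1 + M * B1)" using g1 uv by (intro mult_left_mono) auto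
  have i2: "v * P y \<ge> v * (P z + K * A2 + M * B2)" using g2 uv by (intro mult_left_mono) auto
  have eq: "u * (P z + K * A1 + M * B1) + v * (P z + K * A2 + M * B2)
      = (u + v) * P z + K * (u * A1 + v * A2) + M * (u * B1 + v * B2)"
    by (simp add: algebra_simps)
  have i3: "u * P x \<le> u * 1" using Px uv by (intro mult_left_mono) auto
  have i4: "v * P y \<le> v * 1" using Py uv by (intro mult_left_mono) auto
  have "P z \<le> 1" using i1 i2 i3 i4 eq A0 B0 uv by simp
  thus "u *\<^sub>R x + v *\<^sub>R y \<in> Keps a e" by (subst Kchar[OF assms(1) e1]) (simp only: P_def z_def)
qed



lemma norm_two:
  fixes y :: "real^'n"
  assumes "j \<noteq> a"
  shows "(y $ a)^2 + (y $ j)^2 \<le> norm y ^ 2"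
proof -
  have "norm y ^ 2 = (\<Sum>i\<in>UNIV. y $ i * y $ i)"
    by (simp add: power2_norm_eq_inner inner_vec_def)
  moreover have "(\<Sum>i\<in>{a, j}. y $ i * y $ i) \<le> (\<Sum>i\<in>UNIV. y $ i * y $ i)"
    by (rule sum_mono2) auto
  moreover have "(\<Sum>i\<in>{a, j}. y $ i * y $ i) = (y $ a)^2 + (y $ j)^2"
    using assms by (simp add: power2_eq_square)
  ultimately show ?thesis by simp
qed

lemma cube_bound:
  fixes S b e :: real
  assumes "0 \<le> S" "1 + b^2 \<le> S^2" "b \<noteq> 0" "0 \<le> e" "e < 1"
  shows "S^3 + e * b^3 > 1"
proof -
  have b2: "0 \<le> b^2" by (rule zero_le_power2)
  have "1 \<le> S^2" using assms(2) b2 by linarith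
  hence "1^2 \<le> S^2" by simp
  hence S1: "1 \<le> S" using assms(1) by (rule power2_le_imp_le)
  have "\<bar>b\<bar>^2 \<le> S^2" using assms(2) by simp
  hence Sb: "\<bar>b\<bar> \<le> S" using assms(1) by (rule power2_le_imp_le)
  have "S * (1 + b^2) \<le> S * S^2" using assms(1,2) by (rule mult_left_mono[rotated])
  hence A: "S + S * \<bar>b\<bar>^2 \<le> S^3" by (simp add: power3_eq_cube power2_eq_square algebra_simps)
  have B: "\<bar>b\<bar> * \<bar>b\<bar>^2 \<le> S * \<bar>b\<bar>^2" using Sb by (rule mult_right_mono) simp
  have C: "\<bar>b\<bar> * \<bar>b\<bar>^2 = \<bar>b\<bar>^3" by (simp add: power3_eq_cube power2_eq_square)
  have D0: "- (\<bar>b\<bar>^3) \<le> b^3"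
  proof -
    have "- \<bar>b^3\<bar> \<le> b^3" by (rule abs_ge_minus_self[unfolded neg_le_iff_le, THEN minus_le_iff[THEN iffD1]])
    thus ?thesis by (simp only: power_abs)
  qed
  have D: "- (e * \<bar>b\<bar>^3) \<le> e * b^3" using mult_left_mono[OF D0 assms(4)] by simp
  have bp: "0 < \<bar>b\<bar>^3" using assms(3) by simp
  have E: "e * \<bar>b\<bar>^3 < \<bar>b\<bar>^3" using assms(5) bp by simp
  show ?thesis using A B C D E S1 by linarith
qed


lemma notcs:
  fixes a j :: "'n::finite"
  assumes "0 < e" "e < 1" "j \<noteq> a"
  shows "\<not> centrally_symmetric (Keps a e)"
proof
  assume "centrally_symmetric (Keps a e)"
  then obtain c X where CX: "X = uminus ` X \<and> Keps a e = (\<lambda>x. c + x) ` X"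
    unfolding centrally_symmetric_def by (elim exE) (erule that)
  note X = conjunct1[OF CX] and KX = conjunct2[OF CX]
  have refl: "c + c - y \<in> Keps a e" if "y \<in> Keps a e" for y
  proof -
    have "y \<in> (\<lambda>x. c + x) ` X" using that unfolding KX .
    then obtain x where x: "x \<in> X" "y = c + x" by (rule imageE)
    have "-x \<in> uminus ` X" using x(1) by (rule imageI)
    hence mx: "-x \<in> X" by (rule subst[where P="\<lambda>S. -x \<in> S", OF X[symmetric]])
    have "c + c - y \<in> (\<lambda>x. c + x) ` X"
      by (rule image_eqI[where x="-x"]) (simp_all add: x(2) mx)
    thus ?thesis unfolding KX .
  qed
  have e0: "0 \<le> e" using assms by simp
  note KC = Kchar[OF e0 assms(2)]
  show False
  proof (cases "c $ a = 0")
    case True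
    define t where "t = root 3 (1 / (1 - e))"
    have t3: "t^3 = 1 / (1 - e)" unfolding t_def using assms by simp
    have tp: "t > 0" unfolding t_def using assms by simp
    define q where "q = - (t *\<^sub>R axis a (1::real))"
    have nq: "norm q = t" using tp by (simp add: q_def)
    have qa: "q $ a = - t" by (simp add: q_def axis_def)
    have "norm q ^ 3 + e * (q $ a)^3 = (1 - e) * t^3" by (simp add: nq qa algebra_simps)
    also have "\<dots> = 1" using t3 assms by simp
    finally have "q \<in> Keps a e" by (subst KC) simp
    hence yK: "c + c - q \<in> Keps a e" by (rule refl)
    define y where "y = c + c - q"
    have ya: "y $ a = t" using True by (simp add: y_def qa)
    have "t \<le> norm y" using component_le_norm_cart[of y a] ya by simp
    hence "t^3 \<le> norm y ^ 3" using tp by (intro power_mono) auto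
    hence "norm y ^ 3 + e * (y $ a)^3 \<ge> (1 + e) * t^3" by (simp add: ya algebra_simps)
    moreover have "(1 + e) * t^3 > 1"
    proof -
      have t3': "t^3 = 1 + e * t^3" using t3 assms by (simp add: field_simps)
      have ep: "e * t^3 > 0" using assms tp by simp
      have "(1 + e) * t^3 = t^3 + e * t^3" by (simp add: distrib_right)
      thus ?thesis using t3' ep by linarith
    qed
    ultimately have "norm y ^ 3 + e * (y $ a)^3 > 1" by linarith
    moreover have "norm y ^ 3 + e * (y $ a)^3 \<le> 1" using yK unfolding y_def[symmetric] KC .
    ultimately show False by linarith
  next
    case False
    define s :: real where "s = (if c $ j \<le> 0 then 1 else -1)"
    define p where "p = s *\<^sub>R axis j (1::real)"
    have np: "norm p = 1" by (simp add: p_def s_def)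
    have pa: "p $ a = 0" using assms by (simp add: p_def axis_def)
    have pj: "p $ j = s" by (simp add: p_def axis_def)
    have "p \<in> Keps a e" by (subst KC) (simp add: np pa)
    hence yK: "c + c - p \<in> Keps a e" by (rule refl)
    define y where "y = c + c - p"
    have ya: "y $ a = 2 * c $ a" using pa by (simp add: y_def)
    have yj: "1 \<le> (y $ j)^2"
    proof -
      have "1 \<le> \<bar>y $ j\<bar>" using pj by (simp add: y_def s_def)
      hence "1^2 \<le> \<bar>y $ j\<bar>^2" by (intro power_mono) auto
      thus ?thesis by simp
    qed
    have "1 + (y $ a)^2 \<le> norm y ^ 2" using norm_two[OF assms(3), of y] yj by linarith
    from cube_bound[OF norm_ge_zero this _ e0 assms(2)] False ya
    have "norm y ^ 3 + e * (y $ a)^3 > 1" by simp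
    moreover have "norm y ^ 3 + e * (y $ a)^3 \<le> 1" using yK unfolding y_def[symmetric] KC .
    ultimately show False by linarith
  qed
qed


theorem lemma3p2:
  fixes a :: "'n::finite"
  assumes "CARD('n) \<ge> 2"
  shows "(\<forall>\<epsilon>. 0 < \<epsilon> \<and> \<epsilon> < 1 \<longrightarrow>
            smooth_on (UNIV - {0}) (rhoK a \<epsilon>) \<and> \<not> centrally_symmetric (Keps a \<epsilon>))
       \<and> (\<exists>\<epsilon>0. 0 < \<epsilon>0 \<and> \<epsilon>0 \<le> 1 \<and> (\<forall>\<epsilon>. 0 < \<epsilon> \<and> \<epsilon> < \<epsilon>0 \<longrightarrow> convex (Keps a \<epsilon>)))"
proof -
  obtain j :: 'n where j: "j \<noteq> a"
  proof (rule ccontr)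
    assume "\<not> thesis"
    hence "\<forall>j::'n. j = a" using that by blast
    hence "(UNIV :: 'n set) = {a}" by auto
    hence "CARD('n) = card {a}" by (rule arg_cong)
    hence "CARD('n) = 1" by simp
    thus False using assms by simp
  qed
  have P1: "\<forall>\<epsilon>. 0 < \<epsilon> \<and> \<epsilon> < 1 \<longrightarrow>
            smooth_on (UNIV - {0}) (rhoK a \<epsilon>) \<and> \<not> centrally_symmetric (Keps a \<epsilon>)"
  proof (intro allI impI conjI)
    fix \<epsilon> :: real assume h: "0 < \<epsilon> \<and> \<epsilon> < 1"
    show "smooth_on (UNIV - {0}) (rhoK a \<epsilon>)" using h by (intro smooth) auto
    show "\<not> centrally_symmetric (Keps a \<epsilon>)" using h j by (intro notcs) auto
  qed
  have P2: "\<exists>\<epsilon>0. 0 < \<epsilon>0 \<and> \<epsilon>0 \<le> 1 \<and> (\<forall>\<epsilon>. 0 < \<epsilon> \<and> \<epsilon> < \<epsilon>0 \<longrightarrow> convex (Keps a \<epsilon>))"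
  proof (intro exI[of _ "1/18"] conjI allI impI)
    fix \<epsilon> :: real assume h: "0 < \<epsilon> \<and> \<epsilon> < 1/18"
    show "convex (Keps a \<epsilon>)" using h by (intro convK) auto
  qed simp_all
  show ?thesis using P1 P2 by blast
qed

end
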